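(* The ideal $\underline{\mathfrak c}([E_z]_{\mathbb C},f_\rho):=\{\alpha\in\mathcal O_{f_z}:\alpha\,\Omega'(\Lambda^\vee)\subset\Omega'(\Lambda)\}$ equals $f_\rho\sqrt{D_z}\,i\,\mathcal O_{f_z}=f_\rho f_z\sqrt{D_K}\,\mathcal O_{f_z}$. Consequently the CM group $(\mathcal O_{f_z}/\underline{\mathfrak c})^\times$ is $(\mathcal O_{f_z}/f_\rho f_z\sqrt{D_K}\mathcal O_{f_z})^\times$, and it is the same for all elliptic curves with complex multiplication by $\mathcal O_{f_z}$ and the same $f_\rho$.
   Context: Let $z\in\mathcal H$ (upper half plane) with $a_zz^2+b_zz+c_z=0$ for coprime integers $a_z>0,b_z,c_z$; $D_z=4a_zc_z-b_z^2>0$; $K=\mathbb Q(z)$, discriminant $D_K<0$, embedded with $\sqrt{D_K}\in\mathcal H$; $D_z=|D_K|f_z^2$; $\mathcal O_{f_z}$ the order of conductor $f_z$, i.e. the ring of complex multiplications of $E_z=\mathbb C/(\mathbb Z+z\mathbb Z)$. Let $f_\rho\ge1$. $\Lambda$: lattice with basis $e_2,e_1$ and Gram matrix $f_\rho\begin{pmatrix}2a_z&b_z\\ b_z&2c_z\end{pmatrix}$, $\Lambda^\vee$ its dual in $\Lambda\otimes\mathbb Q$; $\Omega':\Lambda\otimes\mathbb Q\to\mathbb C$ the $\mathbb Q$-linear map with $\Omega'(e_2)=\sqrt{2a_zf_\rho}$, $\Omega'(e_1)=-\sqrt{2a_zf_\rho}\,z$. The CM group is $(\mathcal O_{f_z}/\underline{\mathfrak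 c})^\times$, acting on $\Lambda^\vee/\Lambda$ via multiplication on $\Omega'(\Lambda^\vee)/\Omega'(\Lambda)$. *)

theory Defs
  imports "HOL-Analysis.Analysis" "HOL-Computational_Algebra.Squarefree"
begin

text \<open>The lattice Z + zZ of the elliptic curve E_z = C/(Z + zZ).\<close>
definition lat :: "complex \<Rightarrow> complex set" where
  "lat z = {of_int m + of_int n * z | m n. True}"

text \<open>Ring of complex multiplications of E_z (the order O_{f_z}).\<close>
definition cm_order :: "complex \<Rightarrow> complex set" where
  "cm_order z = {\<alpha>. \<forall>w\<in>lat z. \<alpha> * w \<in> lat z}"

definition fund_disc :: "int \<Rightarrow> bool" where
  "fund_disc D \<longleftrightarrow> D < 0 \<and>
     ((D mod 4 = 1 \<and> squarefree D) \<or>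
      (\<exists>m. D = 4 * m \<and> (m mod 4 = 2 \<or> m mod 4 = 3) \<and> squarefree m))"

text \<open>Lambda tensor Q = Q^2 with coordinates (x2, x1) = x2 e2 + x1 e1;
  Gram matrix f_rho * [[2a, b], [b, 2c]].\<close>
definition gram :: "int \<Rightarrow> int \<Rightarrow> int \<Rightarrow> int \<Rightarrow> rat \<times> rat \<Rightarrow> rat \<times> rat \<Rightarrow> rat" where
  "gram a b c f v w = of_int f * (2 * of_int a * fst v * fst w
      + of_int b * (fst v * snd w + snd v * fst w) + 2 * of_int c * snd v * snd w)"

definition Lam :: "(rat \<times> rat) set" where
  "Lam = {(of_int m, of_int n) | m n. True}"

definition Lam_dual :: "int \<Rightarrow> int \<Rightarrow> int \<Rightarrow> int \<Rightarrow> (rat \<times> rat) set" where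
  "Lam_dual a b c f = {v. \<forall>w\<in>Lam. gram a b c f v w \<in> \<int>}"

definition Omega' :: "int \<Rightarrow> int \<Rightarrow> complex \<Rightarrow> rat \<times> rat \<Rightarrow> complex" where
  "Omega' a f z v = complex_of_real (sqrt (2 * of_int a * of_int f))
      * (of_rat (fst v) - of_rat (snd v) * z)"

definition cm_ideal :: "int \<Rightarrow> int \<Rightarrow> int \<Rightarrow> complex \<Rightarrow> int \<Rightarrow> complex set" where
  "cm_ideal a b c z f = {\<alpha> \<in> cm_order z.
      (\<lambda>x. \<alpha> * x) ` (Omega' a f z ` Lam_dual a b c f) \<subseteq> Omega' a f z ` Lam}"

definition cm_point :: "complex \<Rightarrow> int \<Rightarrow> int \<Rightarrow> int \<Rightarrow> bool" where
  "cm_point z a b c \<longleftrightarrow> Im z > 0 \<and> a > 0 \<and> gcd a (gcd b c) = 1 \<and>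
     of_int a * z^2 + of_int b * z + of_int c = 0 \<and> 4 * a * c - b^2 > 0"

end

theory Submission
  imports Defs
begin


lemma key:
  assumes "cm_point z a b c"
  shows "2* of_int a*z + of_int b = \<i> * complex_of_real (sqrt (of_int (4*a*c-b^2)))"
proof -
  define w where "w = 2* of_int a*z + of_int b"
  have a: "a > 0" "Im z > 0" "of_int a * z^2 + of_int b * z + of_int c = 0" "4*a*c-b^2 > 0"
    using assms unfolding cm_point_def by auto
  have w2: "w^2 = of_int (b^2 - 4*a*c)"
  proof -
    have "w^2 = 4 * of_int a * (of_int a * z^2 + of_int b * z) + of_int b ^2"
      unfolding w_def by (simp add: power2_eq_square algebra_simps)
    also have "of_int a * z^2 + of_int b * z = - of_int c" using a(3) by (simp add: algebra_simps add_eq_0_iff)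
    finally show ?thesis by simp
  qed
  have imw: "Im w > 0" unfolding w_def using a by simp
  have "Re (w^2) = Re w ^2 - Im w ^2" "Im (w^2) = 2 * Re w * Im w"
    by (simp_all add: power2_eq_square)
  then have r0: "Re w = 0" and iw: "Im w ^2 = of_int (4*a*c - b^2)"
    using w2 imw by auto
  have "Im w = sqrt (of_int (4*a*c-b^2))" using iw imw
    by (metis abs_of_pos real_sqrt_abs)
  then have "w = \<i> * complex_of_real (sqrt (of_int (4*a*c-b^2)))"
    using r0 by (simp add: complex_eq_iff)
  then show ?thesis unfolding w_def .
qed



lemma lat_iff: "w \<in> lat z \<longleftrightarrow> (\<exists>m n. w = of_int m + of_int n * z)"
  unfolding lat_def by auto

lemma lat_int_mult: "w \<in> lat z \<Longrightarrow> of_int k * w \<in> lat z"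
proof -
  assume "w \<in> lat z"
  then obtain m n where "w = of_int m + of_int n * z" unfolding lat_iff by auto
  then have "of_int k * w = of_int (k*m) + of_int (k*n) * z" by (simp add: algebra_simps)
  then show ?thesis unfolding lat_iff by blast
qed

lemma za_lemma: "(x::complex) * y + u + v = 0 \<Longrightarrow> x * y = - u - v"
  by (drule arg_cong[where f="\<lambda>t. t - u - v"]) simp

lemma G1: "(A::complex)*Z^2 = -(B*Z) - C \<Longrightarrow> (2*A*Z+B)*(P+Q*Z) = (B*P - 2*Q*C) + (2*A*P - B*Q)*Z"
  by algebra

lemma G2: "(A::complex)*Z^2 = -(B*Z) - C \<Longrightarrow> A*Z*(P+Q*Z) = (-Q*C) + (A*P - Q*B)*Z"
  by algebra

lemma G3: "(A::complex)*Z^2 = -(B*Z) - C \<Longrightarrow> (P+Q*Z)*Z = M + N*Z \<Longrightarrow> (A*P - Q*B - A*N)*Z = A*M + Q*C"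
  by algebra

lemma lat_key_mult:
  assumes "of_int a * z^2 + of_int b * z + of_int c = 0" "w \<in> lat z"
  shows "(2 * of_int a * z + of_int b) * w \<in> lat z"
proof -
  obtain p q where w: "w = of_int p + of_int q * z" using assms(2) unfolding lat_iff by auto
  have za: "of_int a * z^2 = - (of_int b * z) - of_int c" using za_lemma[OF assms(1)] .
  have "(2 * of_int a * z + of_int b) * w = (of_int b * of_int p - 2 * of_int q * of_int c) + (2 * of_int a * of_int p - of_int b * of_int q) * z"
    unfolding w by (rule G1[OF za])
  also have "\<dots> = of_int (b*p - 2*q*c) + of_int (2*a*p - b*q) * z" by simp
  finally have "(2 * of_int a * z + of_int b) * w = of_int (b*p - 2*q*c) + of_int (2*a*p - b*q) * z" .
  then show ?thesis unfolding lat_iff by blast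
qed

lemma Lam_dual_iff:
  "v \<in> Lam_dual a b c f \<longleftrightarrow>
     of_int f * (2 * of_int a * fst v + of_int b * snd v) \<in> \<int> \<and>
     of_int f * (of_int b * fst v + 2 * of_int c * snd v) \<in> \<int>"
proof
  assume "v \<in> Lam_dual a b c f"
  moreover have L10: "((1::rat),(0::rat)) \<in> Lam" unfolding Lam_def
    by (rule CollectI) (rule exI[of _ 1], rule exI[of _ 0], simp)
  moreover have L01: "((0::rat),(1::rat)) \<in> Lam" unfolding Lam_def
    by (rule CollectI) (rule exI[of _ 0], rule exI[of _ 1], simp)
  ultimately have "gram a b c f v (1,0) \<in> \<int>" "gram a b c f v (0,1) \<in> \<int>"
    unfolding Lam_dual_def by blast+
  then show "of_int f * (2 * of_int a * fst v + of_int b * snd v) \<in> \<int> \<and>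
     of_int f * (of_int b * fst v + 2 * of_int c * snd v) \<in> \<int>"
    unfolding gram_def by (simp add: algebra_simps)
next
  assume h: "of_int f * (2 * of_int a * fst v + of_int b * snd v) \<in> \<int> \<and>
     of_int f * (of_int b * fst v + 2 * of_int c * snd v) \<in> \<int>"
  show "v \<in> Lam_dual a b c f" unfolding Lam_dual_def Lam_def
  proof (intro CollectI ballI)
    fix w :: "rat \<times> rat" assume "w \<in> {(of_int m, of_int n) | m n. True}"
    then obtain m n :: int where wmn: "w = (of_int m, of_int n)" by blast
    have "gram a b c f v (of_int m, of_int n) = of_int m * (of_int f * (2 * of_int a * fst v + of_int b * snd v))
       + of_int n * (of_int f * (of_int b * fst v + 2 * of_int c * snd v))"
      unfolding gram_def by (simp add: algebra_simps)
    also have "\<dots> \<in> \<int>"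
      by (rule Ints_add[OF Ints_mult[OF Ints_of_int conjunct1[OF h]] Ints_mult[OF Ints_of_int conjunct2[OF h]]])
    finally show "gram a b c f v w \<in> \<int>" unfolding wmn .
  qed
qed

lemma Omega_Lam_iff:
  assumes "a > 0" "f \<ge> 1"
  shows "complex_of_real (sqrt (2 * of_int a * of_int f)) * w \<in> Omega' a f z ` Lam \<longleftrightarrow> w \<in> lat z"
proof -
  have s: "complex_of_real (sqrt (2 * of_int a * of_int f)) \<noteq> 0" using assms by simp
  have "complex_of_real (sqrt (2 * of_int a * of_int f)) * w \<in> Omega' a f z ` Lam \<longleftrightarrow>
        (\<exists>m n::int. w = of_int m - of_int n * z)" (is "?L \<longleftrightarrow> ?R")
  proof
    assume ?L
    then obtain v where v: "v \<in> Lam" "complex_of_real (sqrt (2 * of_int a * of_int f)) * w = Omega' a f z v"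
      by (auto simp only: image_iff)
    obtain m n :: int where "v = (of_int m, of_int n)" using v(1) unfolding Lam_def by blast
    with v(2) have "complex_of_real (sqrt (2 * of_int a * of_int f)) * w = complex_of_real (sqrt (2 * of_int a * of_int f)) * (of_int m - of_int n * z)"
      unfolding Omega'_def by simp
    then have "w = of_int m - of_int n * z" using s by (metis mult_cancel_left)
    then show ?R by blast
  next
    assume ?R
    then obtain m n :: int where "w = of_int m - of_int n * z" by blast
    then have "complex_of_real (sqrt (2 * of_int a * of_int f)) * w = Omega' a f z (of_int m, of_int n)"
      unfolding Omega'_def by simp
    moreover have "(of_int m, of_int n) \<in> Lam" unfolding Lam_def by blast
    ultimately show ?L by blast
  qed
  also have "\<dots> \<longleftrightarrow> w \<in> lat z"
  proof
    assume "\<exists>m n::int. w = of_int m - of_int n * z"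
    then obtain m n :: int where "w = of_int m - of_int n * z" by blast
    then have "w = of_int m + of_int (-n) * z" by simp
    then show "w \<in> lat z" unfolding lat_iff by blast
  next
    assume "w \<in> lat z"
    then obtain m n :: int where "w = of_int m + of_int n * z" unfolding lat_iff by blast
    then have "w = of_int m - of_int (-n) * z" by simp
    then show "\<exists>m n::int. w = of_int m - of_int n * z" by blast
  qed
  finally show ?thesis .
qed



lemma lin_div: "(n::rat) \<noteq> 0 \<Longrightarrow> f * (u * (x / n) + w * (y / n)) = (f * (u * x + w * y)) / n"
  by (simp add: field_simps)

lemma omega_gen: "(a::complex)*z^2 = -(b*z) - c \<Longrightarrow> (x2 - x1*z) * (f*(2*a*z+b)) = f*(b*x2 + 2*c*x1) + f*(2*a*x2 + b*x1)*z"
  by algebra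


lemma part1:
  assumes cm: "cm_point z a b c" and f1: "f \<ge> 1"
  shows "cm_ideal a b c z f =
           {of_int f * complex_of_real (sqrt (of_int (4 * a * c - b^2))) * \<i> * \<beta> | \<beta>. \<beta> \<in> cm_order z}"
proof -
  have a: "a > 0" "Im z > 0" "of_int a * z^2 + of_int b * z + of_int c = 0" "4*a*c-b^2 > 0"
    using cm unfolding cm_point_def by auto
  define D where "D = 4*a*c-b^2"
  define r where "r = sqrt (of_int D)"
  define s where "s = complex_of_real (sqrt (2 * of_int a * of_int f))"
  define \<kappa> where "\<kappa> = of_int f * (2 * of_int a * z + of_int b)"
  have kap: "\<kappa> = of_int f * complex_of_real r * \<i>"
    unfolding \<kappa>_def r_def D_def key[OF cm] by simp
  have Dpos: "D > 0" using a D_def by simp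
  have rpos: "r > 0" unfolding r_def using Dpos by simp
  have k0: "\<kappa> \<noteq> 0" unfolding kap using rpos f1 by simp
  have s0: "s \<noteq> 0" unfolding s_def using a f1 by simp
  have za: "of_int a * z^2 = - (of_int b * z) - of_int c" using za_lemma[OF a(3)] .
  have omega: "Omega' a f z v * \<kappa> = s * (of_rat (of_int f * (of_int b * fst v + 2 * of_int c * snd v))
        + of_rat (of_int f * (2 * of_int a * fst v + of_int b * snd v)) * z)" for v
  proof -
    have e1: "of_rat (rat_of_int f * (rat_of_int b * fst v + 2 * rat_of_int c * snd v)) = (of_int f * (of_int b * of_rat (fst v) + 2 * of_int c * of_rat (snd v)) :: complex)"
      by (simp add: of_rat_mult of_rat_add)
    have e2: "of_rat (rat_of_int f * (2 * rat_of_int a * fst v + rat_of_int b * snd v)) = (of_int f * (2 * of_int a * of_rat (fst v) + of_int b * of_rat (snd v)) :: complex)"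
      by (simp add: of_rat_mult of_rat_add)
    have "Omega' a f z v * \<kappa> = s * ((of_rat (fst v) - of_rat (snd v) * z) * (of_int f * (2 * of_int a * z + of_int b)))"
      unfolding Omega'_def s_def \<kappa>_def by (simp only: mult.assoc)
    also have "(of_rat (fst v) - of_rat (snd v) * z) * (of_int f * (2 * of_int a * z + of_int b)) =
       of_int f * (of_int b * of_rat (fst v) + 2 * of_int c * of_rat (snd v)) + of_int f * (2 * of_int a * of_rat (fst v) + of_int b * of_rat (snd v)) * z"
      by (rule omega_gen[OF za])
    finally show ?thesis unfolding e1 e2 .
  qed
  have Omega_Lam: "s * w \<in> Omega' a f z ` Lam \<longleftrightarrow> w \<in> lat z" for w
    unfolding s_def using Omega_Lam_iff a(1) f1 by blast
  show ?thesis
  proof (intro equalityI subsetI)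
    fix \<alpha> assume h: "\<alpha> \<in> cm_ideal a b c z f"
    then have hO: "\<alpha> \<in> cm_order z" and hI: "\<And>v. v \<in> Lam_dual a b c f \<Longrightarrow> \<alpha> * Omega' a f z v \<in> Omega' a f z ` Lam"
      unfolding cm_ideal_def by blast+
    define \<beta> where "\<beta> = \<alpha> / \<kappa>"
    have "\<beta> \<in> cm_order z" unfolding cm_order_def mem_Collect_eq
    proof (intro ballI)
      fix w assume "w \<in> lat z"
      then obtain p q where w: "w = of_int p + of_int q * z" unfolding lat_iff by blast
      define v where "v = ((of_int (2*c*q - b*p) / of_int (f*D) :: rat), (of_int (2*a*p - b*q) / of_int (f*D) :: rat))"
      have fD: "rat_of_int (f*D) \<noteq> 0" using f1 Dpos by simp
      have g1: "of_int f * (2 * of_int a * fst v + of_int b * snd v) = (of_int q :: rat)"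
      proof -
        have "of_int f * (2 * of_int a * fst v + of_int b * snd v) = rat_of_int (f * (2*a*(2*c*q - b*p) + b*(2*a*p - b*q))) / of_int (f*D)"
          unfolding v_def fst_conv snd_conv lin_div[OF fD] by simp
        also have "f * (2*a*(2*c*q - b*p) + b*(2*a*p - b*q)) = (f*D)*q" unfolding D_def by (simp add: algebra_simps power2_eq_square)
        finally show ?thesis using fD by simp
      qed
      have g2: "of_int f * (of_int b * fst v + 2 * of_int c * snd v) = (of_int p :: rat)"
      proof -
        have "of_int f * (of_int b * fst v + 2 * of_int c * snd v) = rat_of_int (f * (b*(2*c*q - b*p) + 2*c*(2*a*p - b*q))) / of_int (f*D)"
          unfolding v_def fst_conv snd_conv lin_div[OF fD] by simp
        also have "f * (b*(2*c*q - b*p) + 2*c*(2*a*p - b*q)) = (f*D)*p" unfolding D_def by (simp add: algebra_simps power2_eq_square)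
        finally show ?thesis using fD by simp
      qed
      have vd: "v \<in> Lam_dual a b c f" unfolding Lam_dual_iff g1 g2 by simp
      have "Omega' a f z v * \<kappa> = s * w" unfolding omega g1 g2 w by simp
      moreover have "\<alpha> = \<beta> * \<kappa>" unfolding \<beta>_def using k0 by simp
      ultimately have "\<alpha> * Omega' a f z v = s * (\<beta> * w)" by (metis mult.assoc mult.commute)
      with hI[OF vd] show "\<beta> * w \<in> lat z" using Omega_Lam by simp
    qed
    moreover have "\<alpha> = of_int f * complex_of_real r * \<i> * \<beta>" unfolding \<beta>_def kap[symmetric] using k0 by simp
    ultimately show "\<alpha> \<in> {of_int f * complex_of_real (sqrt (of_int (4 * a * c - b^2))) * \<i> * \<beta> | \<beta>. \<beta> \<in> cm_order z}"
      unfolding r_def D_def by blast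
  next
    fix \<alpha> assume "\<alpha> \<in> {of_int f * complex_of_real (sqrt (of_int (4 * a * c - b^2))) * \<i> * \<beta> | \<beta>. \<beta> \<in> cm_order z}"
    then obtain \<beta> where b: "\<beta> \<in> cm_order z" and al: "\<alpha> = \<kappa> * \<beta>"
      unfolding kap r_def D_def by blast
    have kl: "\<kappa> * w \<in> lat z" if "w \<in> lat z" for w
      unfolding \<kappa>_def using lat_int_mult[OF lat_key_mult[OF a(3) that], of f] by (simp only: mult.assoc)
    have bl: "\<beta> * w \<in> lat z" if "w \<in> lat z" for w using b that unfolding cm_order_def by blast
    have "\<alpha> \<in> cm_order z" unfolding cm_order_def mem_Collect_eq
    proof (intro ballI)
      fix w assume "w \<in> lat z"
      then have "\<beta> * (\<kappa> * w) \<in> lat z" using kl bl by blast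
      then show "\<alpha> * w \<in> lat z" unfolding al by (simp only: mult_ac)
    qed
    moreover have "(\<lambda>x. \<alpha> * x) ` (Omega' a f z ` Lam_dual a b c f) \<subseteq> Omega' a f z ` Lam"
    proof (intro subsetI, elim imageE)
      fix x u v assume x: "x = \<alpha> * u" and u: "u = Omega' a f z v" and v: "v \<in> Lam_dual a b c f"
      obtain g1 g2 where g1: "of_int f * (2 * of_int a * fst v + of_int b * snd v) = rat_of_int g1"
        and g2: "of_int f * (of_int b * fst v + 2 * of_int c * snd v) = rat_of_int g2"
        using v unfolding Lam_dual_iff by (auto elim!: Ints_cases)
      have "x = \<beta> * (Omega' a f z v * \<kappa>)" unfolding x u al by (simp only: mult_ac)
      also have "\<dots> = \<beta> * (s * (of_int g2 + of_int g1 * z))" unfolding omega g1 g2 of_rat_of_int_eq ..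
      finally have "x = s * (\<beta> * (of_int g2 + of_int g1 * z))" by (simp only: mult_ac)
      moreover have "of_int g2 + of_int g1 * z \<in> lat z" unfolding lat_iff by blast
      ultimately show "x \<in> Omega' a f z ` Lam" using Omega_Lam bl by simp
    qed
    ultimately show "\<alpha> \<in> cm_ideal a b c z f" unfolding cm_ideal_def by blast
  qed
qed



lemma dvd_lemma:
  fixes a b c q :: int
  assumes "gcd a (gcd b c) = 1" "a dvd q*b" "a dvd q*c"
  shows "a dvd q"
proof -
  have "a dvd gcd (q*b) (q*c)" using assms by simp
  also have "gcd (q*b) (q*c) = \<bar>q * gcd b c\<bar>" by (simp add: gcd_mult_left)
  finally have "a dvd q * gcd b c" by simp
  moreover have "coprime a (gcd b c)" using assms(1) by (simp add: coprime_iff_gcd_eq_1)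
  ultimately show ?thesis by (simp add: coprime_dvd_mult_left_iff)
qed

lemma az_in_order:
  assumes "cm_point z a b c"
  shows "of_int a * z \<in> cm_order z"
  unfolding cm_order_def mem_Collect_eq
proof (intro ballI)
  fix w assume "w \<in> lat z"
  then obtain p q where w: "w = of_int p + of_int q * z" unfolding lat_iff by blast
  have e: "of_int a * z^2 + of_int b * z + of_int c = 0" using assms unfolding cm_point_def by auto
  have "of_int a * z * w = (- of_int q * of_int c) + (of_int a * of_int p - of_int q * of_int b) * z"
    unfolding w by (rule G2[OF za_lemma[OF e]])
  also have "\<dots> = of_int (-q*c) + of_int (a*p - q*b) * z" by simp
  finally have "of_int a * z * w = of_int (-q*c) + of_int (a*p - q*b) * z" .
  then show "of_int a * z * w \<in> lat z" unfolding lat_iff by blast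
qed


lemma order_Im:
  assumes cm: "cm_point z a b c" and al: "\<alpha> \<in> cm_order z"
  shows "\<exists>k::int. Im \<alpha> = of_int k * Im (of_int a * z)"
proof -
  have a: "a > 0" "Im z > 0" "of_int a * z^2 + of_int b * z + of_int c = 0" "gcd a (gcd b c) = 1"
    using cm unfolding cm_point_def by auto
  have l1: "1 \<in> lat z" unfolding lat_iff by (rule exI[of _ 1], rule exI[of _ 0]) simp
  have lz: "z \<in> lat z" unfolding lat_iff by (rule exI[of _ 0], rule exI[of _ 1]) simp
  have "\<alpha> * 1 \<in> lat z" using al l1 unfolding cm_order_def by blast
  then obtain p q where p: "\<alpha> = of_int p + of_int q * z" unfolding lat_iff by auto
  have "\<alpha> * z \<in> lat z" using al lz unfolding cm_order_def by blast
  then obtain m n where m: "\<alpha> * z = of_int m + of_int n * z" unfolding lat_iff by auto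
  have za: "of_int a * z^2 = - (of_int b * z) - of_int c" using za_lemma[OF a(3)] .
  have "(of_int a * of_int p - of_int q * of_int b - of_int a * of_int n) * z = of_int a * of_int m + of_int q * of_int c"
    by (rule G3[OF za m[unfolded p]])
  then have eq: "of_int (a*p - q*b - a*n) * z = (of_int (a*m + q*c) :: complex)"
    by simp
  then have "Im (of_int (a*p - q*b - a*n) * z) = 0" by simp
  moreover have "Im (of_int (a*p - q*b - a*n) * z) = real_of_int (a*p - q*b - a*n) * Im z"
    by simp
  ultimately have "real_of_int (a*p - q*b - a*n) * Im z = 0" by simp
  then have "real_of_int (a*p - q*b - a*n) = 0" using a(2) by (metis mult_eq_0_iff less_irrefl)
  then have e1: "a*p - q*b - a*n = 0" by (simp only: of_int_eq_0_iff)
  then have "(of_int (a*m + q*c) :: complex) = 0" using eq by simp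
  then have e2: "a*m + q*c = 0" by (simp only: of_int_eq_0_iff)
  have "q*b = a*(p - n)" using e1 by (simp add: algebra_simps)
  then have "a dvd q*b" by (rule dvdI)
  moreover have "q*c = a*(-m)" using e2 by (simp add: algebra_simps)
  then have "a dvd q*c" by (rule dvdI)
  ultimately have "a dvd q" by (rule dvd_lemma[OF a(4)])
  then obtain k where k: "q = a * k" by (auto simp: dvd_def)
  have "Im \<alpha> = of_int q * Im z" unfolding p by simp
  also have "\<dots> = of_int k * Im (of_int a * z)" unfolding k by simp
  finally show ?thesis by blast
qed

lemma Im_az:
  assumes "cm_point z a b c"
  shows "Im (of_int a * z) = sqrt (of_int (4*a*c-b^2)) / 2"
proof -
  have "Im (2 * of_int a * z + of_int b) = sqrt (of_int (4*a*c-b^2))"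
    unfolding key[OF assms] by simp
  then show ?thesis by simp
qed

theorem proposition3p1p2:
  fixes z :: complex and a b c f\<rho> :: int
  assumes "cm_point z a b c" and "f\<rho> \<ge> 1"
  shows "cm_ideal a b c z f\<rho> =
           {of_int f\<rho> * complex_of_real (sqrt (of_int (4 * a * c - b^2))) * \<i> * \<beta> | \<beta>. \<beta> \<in> cm_order z}
       \<and> (\<forall>DK fz. fund_disc DK \<and> fz \<ge> 1 \<and> 4 * a * c - b^2 = \<bar>DK\<bar> * fz^2 \<longrightarrow>
            cm_ideal a b c z f\<rho> =
              {of_int f\<rho> * of_int fz * csqrt (of_int DK) * \<beta> | \<beta>. \<beta> \<in> cm_order z})
       \<and> (\<forall>z' a' b' c'. cm_point z' a' b' c' \<and> cm_order z' = cm_order z \<longrightarrow>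
            cm_ideal a' b' c' z' f\<rho> = cm_ideal a b c z f\<rho>)"
proof (intro conjI allI impI)
  show P1: "cm_ideal a b c z f\<rho> =
           {of_int f\<rho> * complex_of_real (sqrt (of_int (4 * a * c - b^2))) * \<i> * \<beta> | \<beta>. \<beta> \<in> cm_order z}"
    by (rule part1[OF assms])
  fix DK fz :: int
  assume h: "fund_disc DK \<and> fz \<ge> 1 \<and> 4 * a * c - b^2 = \<bar>DK\<bar> * fz^2"
  have DK: "DK < 0" using h unfolding fund_disc_def by auto
  have cs: "csqrt (of_int DK) = \<i> * complex_of_real (sqrt \<bar>of_int DK\<bar>)"
    using DK by (simp add: csqrt_of_real_nonpos)
  have "sqrt (of_int (4 * a * c - b^2)) = sqrt \<bar>of_int DK\<bar> * of_int fz"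
    using h by (simp add: real_sqrt_mult)
  then have eqn: "of_int f\<rho> * complex_of_real (sqrt (of_int (4 * a * c - b^2))) * \<i> = of_int f\<rho> * of_int fz * csqrt (of_int DK)"
    unfolding cs by simp
  show "cm_ideal a b c z f\<rho> =
              {of_int f\<rho> * of_int fz * csqrt (of_int DK) * \<beta> | \<beta>. \<beta> \<in> cm_order z}"
    unfolding P1 eqn by (rule refl)
next
  fix z' :: complex and a' b' c' :: int
  assume h: "cm_point z' a' b' c' \<and> cm_order z' = cm_order z"
  have cm': "cm_point z' a' b' c'" and O: "cm_order z' = cm_order z" using h by auto
  define r where "r = sqrt (of_int (4 * a * c - b^2))"
  define r' where "r' = sqrt (of_int (4 * a' * c' - b'^2))"
  have "4 * a * c - b^2 > 0" using assms(1) unfolding cm_point_def by simp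
  then have "(0::real) < of_int (4 * a * c - b^2)" by (simp only: of_int_0_less_iff)
  then have rp: "r > 0" unfolding r_def by (rule real_sqrt_gt_zero)
  have "4 * a' * c' - b'^2 > 0" using cm' unfolding cm_point_def by simp
  then have "(0::real) < of_int (4 * a' * c' - b'^2)" by (simp only: of_int_0_less_iff)
  then have rp': "r' > 0" unfolding r'_def by (rule real_sqrt_gt_zero)
  have "of_int a * z \<in> cm_order z'" using az_in_order[OF assms(1)] O by simp
  from order_Im[OF cm' this] obtain k where "Im (of_int a * z) = of_int k * Im (of_int a' * z')" by blast
  then have k: "r / 2 = of_int k * (r' / 2)" unfolding Im_az[OF assms(1)] Im_az[OF cm'] r_def r'_def .
  have "of_int a' * z' \<in> cm_order z" using az_in_order[OF cm'] O by simp
  from order_Im[OF assms(1) this] obtain l where "Im (of_int a' * z') = of_int l * Im (of_int a * z)" by blast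
  then have l: "r' / 2 = of_int l * (r / 2)" unfolding Im_az[OF assms(1)] Im_az[OF cm'] r_def r'_def .
  have k': "r = of_int k * r'" using k by simp
  have l': "r' = of_int l * r" using l by simp
  have kk: "r = of_int k * (of_int l * r)" using k' l' by metis
  have "(real_of_int k * real_of_int l) * r = 1 * r" unfolding mult.assoc mult_1_left using kk by (rule sym)
  then have "real_of_int k * real_of_int l = 1" using rp by (simp only: mult_right_cancel less_irrefl)
  then have "real_of_int (k * l) = 1" by simp
  then have kl: "k * l = 1" by (simp only: of_int_eq_1_iff)
  have "0 < real_of_int k * (r' / 2)" using k rp by simp
  then have "0 < real_of_int k" using rp' by (simp add: zero_less_mult_iff)
  then have "k > 0" by simp
  then have "k = 1" using kl pos_zmult_eq_1_iff by blast
  then have rr: "r = r'" using k by simp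
  show "cm_ideal a' b' c' z' f\<rho> = cm_ideal a b c z f\<rho>"
    unfolding part1[OF assms] part1[OF cm' assms(2)] O r_def[symmetric] r'_def[symmetric] rr ..
qed

end
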